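(* Let $P_{2m}(\boldsymbol\lambda)$ be a parallel Eulerian graph with $m\ge1$, and let all edges have activation probability $p\in(0,1]$. Then for every edge $e$, the expected time for the uniform Eulerian strategy to traverse $e$ equals $$\frac{\theta(P_{2m}(\boldsymbol\lambda))+p^{-1}}{2}+\Phi_m.$$ Consequently, $\mathrm{val}(p)\le \frac{\theta(P_{2m}(\boldsymbol\lambda))+p^{-1}}{2}+\Phi_m$.
   Context: Setting: the stochastic search game. Every edge has length $1$ and is active at each stage independently with probability $p$. The hider chooses an edge and stays there. The searcher starts at the root; at each stage, knowing which edges are currently active, she waits or traverses an active edge incident to her position. The hider's payoff is the expected first time the searcher traverses his edge. $\mathrm{val}(p)$ is the value. Parallel graph $P_n(\boldsymbol\lambda)$, with $\boldsymbol\lambda=(\lambda_1,\dots,\lambda_n)$ positive integers: two vertices $O$ (the root) and $D$ joined by $n$ internally vertex-disjoint paths, the $i$-th having $\lambda_i$ edges. When $n=2m$ is even it is Eulerian, and is called a parallel Eulerian graph. Uniform Eulerian strategy: - at $O$ (respectively $D$), wait until at least one untraversed path edge incident to the current vertex is active, then choose uniformly among those active untraversed edges; - then follow the chosen path straight to the other endpoint, waiting whenever the next edge is inactive; - repeat until all edges are traversed. Cycle time: $\theta(P_{2m}(\boldsymbol\lambda))=\sum_{k=1}^{2m}\Big(\frac1{1-(1-p)^k}+\frac{\lambda_k-1}{p}\Big)$. $\Phi_m$ is defined recursively by $\Phi_1=\frac12\big(\frac1{1-(1-p)^2}-\frac1p\big)$ and, for $m>1$, $$\Phi_m=\frac12\frac1{1-(1-p)^{2m}}+\Big(\frac12-\frac1{2m}\Big)\frac1{1-(1-p)^{2m-1}}-\frac1{2m}\Big(\sum_{k=1}^{2(m-1)}\frac1{1-(1-p)^k}+\frac1p\Big)+\frac{m-1}{m}\Phi_{m-1}.$$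 *)

theory Defs
  imports "HOL-Probability.Probability"
begin

(* Parallel graph P_{2m}(lam): paths indexed i < 2*m, path i has lam i edges.
   Edge (i,j), 1 <= j <= lam i, is the j-th edge of path i counted from O. *)

datatype pvertex = VO | VD | Mid nat nat

type_synonym edge = "nat \<times> nat"
type_synonym activation = "edge \<Rightarrow> bool"
(* configuration: current position, set of already traversed edges,
   history of (position, activation pattern, move made) at all past stages *)
type_synonym config = "pvertex \<times> edge set \<times> (pvertex \<times> activation \<times> edge option) list"
(* a (behavioural, possibly randomised) searcher strategy: given everything observed so far
   and the current activation pattern, a distribution over moves (None = wait) *)
type_synonym strategy = "config \<Rightarrow> activation \<Rightarrow> edge option pmf"

definition pedges :: "(nat \<Rightarrow> nat) \<Rightarrow> nat \<Rightarrow> edge set" where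
  "pedges lam m = {(i, j). i < 2 * m \<and> 1 \<le> j \<and> j \<le> lam i}"

definition vtx :: "(nat \<Rightarrow> nat) \<Rightarrow> nat \<Rightarrow> nat \<Rightarrow> pvertex" where
  "vtx lam i j = (if j = 0 then VO else if j = lam i then VD else Mid i j)"

definition end1 :: "(nat \<Rightarrow> nat) \<Rightarrow> edge \<Rightarrow> pvertex" where
  "end1 lam e = vtx lam (fst e) (snd e - 1)"

definition end2 :: "(nat \<Rightarrow> nat) \<Rightarrow> edge \<Rightarrow> pvertex" where
  "end2 lam e = vtx lam (fst e) (snd e)"

definition incident :: "(nat \<Rightarrow> nat) \<Rightarrow> edge \<Rightarrow> pvertex \<Rightarrow> bool" where
  "incident lam e v \<longleftrightarrow> v = end1 lam e \<or> v = end2 lam e"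

definition other_end :: "(nat \<Rightarrow> nat) \<Rightarrow> edge \<Rightarrow> pvertex \<Rightarrow> pvertex" where
  "other_end lam e v = (if v = end1 lam e then end2 lam e else end1 lam e)"

definition activation_pmf :: "(nat \<Rightarrow> nat) \<Rightarrow> nat \<Rightarrow> real \<Rightarrow> activation pmf" where
  "activation_pmf lam m p = Pi_pmf (pedges lam m) False (\<lambda>_. bernoulli_pmf p)"

definition stage :: "(nat \<Rightarrow> nat) \<Rightarrow> nat \<Rightarrow> real \<Rightarrow> strategy \<Rightarrow> config \<Rightarrow> config pmf" where
  "stage lam m p \<sigma> c =
     (case c of (pos, trav, hist) \<Rightarrow>
       do { a \<leftarrow> activation_pmf lam m p;
            mv \<leftarrow> \<sigma> c a;
            return_pmf
              (case mv of
                 Some e \<Rightarrow>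
                   if e \<in> pedges lam m \<and> a e \<and> incident lam e pos
                   then (other_end lam e pos, insert e trav, hist @ [(pos, a, Some e)])
                   else (pos, trav, hist @ [(pos, a, None)])
               | None \<Rightarrow> (pos, trav, hist @ [(pos, a, None)])) })"

definition config_dist :: "(nat \<Rightarrow> nat) \<Rightarrow> nat \<Rightarrow> real \<Rightarrow> strategy \<Rightarrow> nat \<Rightarrow> config pmf" where
  "config_dist lam m p \<sigma> t = ((\<lambda>d. bind_pmf d (stage lam m p \<sigma>)) ^^ t) (return_pmf (VO, {}, []))"

(* expected first time edge e is traversed: E[T] = sum_{t>=0} P(T > t) (may be infinite) *)
definition search_time :: "(nat \<Rightarrow> nat) \<Rightarrow> nat \<Rightarrow> real \<Rightarrow> strategy \<Rightarrow> edge \<Rightarrow> ennreal" where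
  "search_time lam m p \<sigma> e =
     (\<Sum>t. ennreal (measure_pmf.prob (config_dist lam m p \<sigma> t) {c. e \<notin> fst (snd c)}))"

definition game_val :: "(nat \<Rightarrow> nat) \<Rightarrow> nat \<Rightarrow> real \<Rightarrow> ennreal" where
  "game_val lam m p = (INF \<sigma>. SUP e \<in> pedges lam m. search_time lam m p \<sigma> e)"

(* At an internal vertex of a path there is only one untraversed incident edge (the next
   edge of the path), so this is "follow the path straight, waiting when inactive". *)
definition uniform_eulerian :: "(nat \<Rightarrow> nat) \<Rightarrow> nat \<Rightarrow> strategy" where
  "uniform_eulerian lam m c a =
     (case c of (pos, trav, hist) \<Rightarrow>
       (let A = {e \<in> pedges lam m. a e \<and> e \<notin> trav \<and> incident lam e pos}
        in if A = {} then return_pmf None else map_pmf Some (pmf_of_set A)))"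

definition theta :: "(nat \<Rightarrow> nat) \<Rightarrow> nat \<Rightarrow> real \<Rightarrow> real" where
  "theta lam m p = (\<Sum>k<2 * m. 1 / (1 - (1 - p) ^ (k + 1)) + (real (lam k) - 1) / p)"

fun Phi :: "real \<Rightarrow> nat \<Rightarrow> real" where
  "Phi p 0 = 0"
| "Phi p (Suc 0) = 1/2 * (1 / (1 - (1 - p)^2) - 1 / p)"
| "Phi p (Suc (Suc k)) =
     (let m = Suc (Suc k) in
        1/2 * (1 / (1 - (1 - p) ^ (2 * m)))
      + (1/2 - 1 / (2 * real m)) * (1 / (1 - (1 - p) ^ (2 * m - 1)))
      - 1 / (2 * real m) * ((\<Sum>j = 1..2 * (m - 1). 1 / (1 - (1 - p) ^ j)) + 1 / p)
      + (real m - 1) / real m * Phi p (Suc k))"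

end

theory Submission
  imports Defs
begin


lemma integrable_bdd_pmf:
  fixes f :: "'a \<Rightarrow> real"
  assumes "\<And>x. \<bar>f x\<bar> \<le> B"
  shows "integrable (measure_pmf M) f"
  by (rule measure_pmf.integrable_const_bound[where B=B]) (use assms in auto)

definition swp :: "'a \<Rightarrow> 'a \<Rightarrow> 'a \<Rightarrow> 'a" where
  "swp x y z = (if z = x then y else if z = y then x else z)"

lemma swp_bij: "x \<in> I \<Longrightarrow> y \<in> I \<Longrightarrow> bij_betw (swp x y) I I"
  by (rule bij_betwI[where g="swp x y"]) (auto simp: swp_def)

lemma swp_inv[simp]: "swp x y (swp x y z) = z"
  unfolding swp_def by auto

lemma pi_sym:
  fixes I E :: "'a set" and p :: real
  assumes fin: "finite I" and EI: "E \<subseteq> I" and x: "x \<in> E" and y: "y \<in> E"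
  defines "D \<equiv> Pi_pmf I False (\<lambda>_. bernoulli_pmf p)"
  shows "measure_pmf.expectation D (\<lambda>a. if a x then 1 / real (card {z\<in>E. a z}) else 0)
       = measure_pmf.expectation D (\<lambda>a. if a y then 1 / real (card {z\<in>E. a z}) else 0)"
proof -
  have xI: "x \<in> I" and yI: "y \<in> I" using EI x y by auto
  have eq: "D = map_pmf (\<lambda>g. g \<circ> swp x y) D"
    unfolding D_def
  proof (rule Pi_pmf_bij_betw[OF fin swp_bij[OF xI yI]])
    fix z assume "z \<notin> I" thus "swp x y z \<notin> I" using xI yI by (auto simp: swp_def)
  qed
  define F where "F = (\<lambda>a::'a\<Rightarrow>bool. if a y then 1 / real (card {z\<in>E. a z}) else (0::real))"
  have "measure_pmf.expectation D F = measure_pmf.expectation (map_pmf (\<lambda>g. g \<circ> swp x y) D) F"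
    using eq by (rule arg_cong)
  also have "\<dots> = measure_pmf.expectation D (\<lambda>a. F (a \<circ> swp x y))"
    by (rule integral_map_pmf)
  finally have "measure_pmf.expectation D (\<lambda>a. if a y then 1 / real (card {z\<in>E. a z}) else 0)
     = measure_pmf.expectation D (\<lambda>a. if (a \<circ> swp x y) y then 1 / real (card {z\<in>E. (a \<circ> swp x y) z}) else 0)"
    unfolding F_def .
  also have "\<dots> = measure_pmf.expectation D (\<lambda>a. if a x then 1 / real (card {z\<in>E. a z}) else 0)"
  proof (rule Bochner_Integration.integral_cong[OF refl])
    fix a :: "'a \<Rightarrow> bool"
    have "{z\<in>E. (a \<circ> swp x y) z} = swp x y ` {z\<in>E. a z}"
      using x y by (auto simp: swp_def image_iff)
    moreover have "inj_on (swp x y) {z\<in>E. a z}" by (metis inj_onI swp_inv)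
    ultimately have "card {z\<in>E. (a \<circ> swp x y) z} = card {z\<in>E. a z}" by (simp add: card_image)
    moreover have "(a \<circ> swp x y) y = a x" by (simp add: swp_def)
    ultimately show "(if (a \<circ> swp x y) y then 1 / real (card {z\<in>E. (a \<circ> swp x y) z}) else 0)
        = (if a x then 1 / real (card {z\<in>E. a z}) else 0)" by simp
  qed
  finally show ?thesis by simp
qed

lemma pi_allfalse:
  fixes I E :: "'a set" and p :: real
  assumes fin: "finite I" and EI: "E \<subseteq> I" and p: "0 \<le> p" "p \<le> 1"
  shows "measure_pmf.expectation (Pi_pmf I False (\<lambda>_. bernoulli_pmf p))
           (\<lambda>a. if {z\<in>E. a z} = {} then 1 else 0) = (1 - p) ^ card E"
proof -
  have "(\<lambda>a. if {z\<in>E. a z} = {} then 1 else 0) = (\<lambda>a. \<Prod>z\<in>I. (\<lambda>z v. if z \<in> E \<and> v then 0 else 1::real) z (a z))"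
  proof
    fix a :: "'a \<Rightarrow> bool"
    show "(if {z\<in>E. a z} = {} then 1 else 0) = (\<Prod>z\<in>I. (\<lambda>z v. if z \<in> E \<and> v then 0 else 1::real) z (a z))"
    proof (cases "\<exists>z\<in>E. a z")
      case True
      then obtain z where z: "z \<in> E" "a z" by blast
      with EI have "z \<in> I" by blast
      with z fin have "(\<Prod>z\<in>I. (\<lambda>z v. if z \<in> E \<and> v then 0 else 1::real) z (a z)) = 0"
        by (subst prod_zero_iff) auto
      with z show ?thesis by auto
    next
      case False
      then have "(\<Prod>z\<in>I. (\<lambda>z v. if z \<in> E \<and> v then 0 else 1::real) z (a z)) = 1"
        by (intro prod.neutral) auto
      with False show ?thesis by auto
    qed
  qed
  moreover have "measure_pmf.expectation (Pi_pmf I False (\<lambda>_. bernoulli_pmf p))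
      (\<lambda>a. \<Prod>z\<in>I. (\<lambda>z v. if z \<in> E \<and> v then 0 else 1::real) z (a z))
     = (\<Prod>z\<in>I. measure_pmf.expectation (bernoulli_pmf p) (\<lambda>v. if z \<in> E \<and> v then 0 else 1::real))"
    by (rule expectation_prod_Pi_pmf[OF fin]) (simp_all add: integrable_measure_pmf_finite)
  moreover have "(\<Prod>z\<in>I. measure_pmf.expectation (bernoulli_pmf p) (\<lambda>v. if z \<in> E \<and> v then 0 else 1::real))
      = (\<Prod>z\<in>I. if z \<in> E then 1 - p else 1)"
    using p by (intro prod.cong refl) (auto simp: integral_bernoulli_pmf)
  moreover have "(\<Prod>z\<in>I. if z \<in> E then 1 - p else 1) = (1 - p) ^ card E"
    proof -
    have "(\<Prod>z\<in>I. if z \<in> E then 1 - p else 1) = (\<Prod>z\<in>E. if z \<in> E then 1 - p else 1)"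
      by (rule prod.mono_neutral_cong_right[OF fin EI]) auto
    then show ?thesis by simp
  qed
  ultimately show ?thesis by simp
qed


lemma pi_choice:
  fixes I E :: "'a set" and p c :: real and f :: "'a \<Rightarrow> real"
  assumes fin: "finite I" and EI: "E \<subseteq> I" and Ene: "E \<noteq> {}" and p: "0 \<le> p" "p \<le> 1"
  shows "measure_pmf.expectation (Pi_pmf I False (\<lambda>_. bernoulli_pmf p))
     (\<lambda>a. if {z\<in>E. a z} = {} then c else (\<Sum>z\<in>{z\<in>E. a z}. f z) / real (card {z\<in>E. a z}))
   = (1 - p) ^ card E * c + (1 - (1 - p) ^ card E) / real (card E) * (\<Sum>z\<in>E. f z)"
proof -
  define D where "D = Pi_pmf I False (\<lambda>_. bernoulli_pmf p)"
  define A where "A = (\<lambda>a::'a\<Rightarrow>bool. {z\<in>E. a z})"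
  define w where "w = (\<lambda>z. measure_pmf.expectation D (\<lambda>a. if a z then 1 / real (card {z\<in>E. a z}) else 0))"
  have finE: "finite E" using fin EI finite_subset by blast
  have cardA: "card (A a) \<ge> 1" if "z \<in> E" "a z" for a z
  proof -
    have "z \<in> {z\<in>E. a z}" using that by simp
    moreover have "finite {z\<in>E. a z}" using finE by simp
    ultimately have "card {z\<in>E. a z} > 0" by (auto simp: card_gt_0_iff)
    thus ?thesis unfolding A_def by simp
  qed
  have int1: "integrable (measure_pmf D) (\<lambda>a. if a z then 1 / real (card {z\<in>E. a z}) else 0)" if "z \<in> E" for z
  proof (rule integrable_bdd_pmf[where B=1])
    fix a :: "'a \<Rightarrow> bool"
    show "\<bar>if a z then 1 / real (card {z\<in>E. a z}) else 0\<bar> \<le> 1"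
      using cardA[OF that, of a] unfolding A_def by auto
  qed
  have int0: "integrable (measure_pmf D) (\<lambda>a. if A a = {} then 1 else 0::real)"
    by (rule integrable_bdd_pmf[where B=1]) auto
  obtain z0 where z0: "z0 \<in> E" using Ene by blast
  have wz: "w z = w z0" if "z \<in> E" for z
    unfolding w_def D_def by (rule pi_sym[OF fin EI that z0])
  have sumind: "(\<Sum>z\<in>E. (if a z then 1 / real (card {z\<in>E. a z}) else 0)) = 1 - (if A a = {} then 1 else 0)" for a
  proof (cases "A a = {}")
    case True
    then show ?thesis unfolding A_def by (auto intro!: sum.neutral)
  next
    case False
    have "(\<Sum>z\<in>E. (if a z then 1 / real (card {z\<in>E. a z}) else 0)) = (\<Sum>z\<in>{z\<in>E. a z}. 1 / real (card {z\<in>E. a z}))"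
      using sum.inter_filter[OF finE, of "\<lambda>z. 1 / real (card {z\<in>E. a z})" a] by simp
    also have "\<dots> = 1" using False finE unfolding A_def by simp
    finally show ?thesis using False by simp
  qed
  have "(\<Sum>z\<in>E. w z) = measure_pmf.expectation D (\<lambda>a. \<Sum>z\<in>E. (if a z then 1 / real (card {z\<in>E. a z}) else 0))"
    unfolding w_def by (subst Bochner_Integration.integral_sum) (auto intro: int1)
  also have "\<dots> = measure_pmf.expectation D (\<lambda>a. 1 - (if A a = {} then 1 else 0))"
    using sumind by simp
  also have "\<dots> = 1 - (1 - p) ^ card E"
    using int0 pi_allfalse[OF fin EI p] unfolding D_def A_def by (simp add: prob_space.prob_space measure_pmf.prob_space_axioms)
  finally have "(\<Sum>z\<in>E. w z) = 1 - (1 - p) ^ card E" .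
  moreover have "(\<Sum>z\<in>E. w z) = real (card E) * w z0" using wz by simp
  ultimately have w0: "w z0 = (1 - (1 - p) ^ card E) / real (card E)"
    using finE Ene by (simp add: field_simps)
  have integrand: "(if A a = {} then c else (\<Sum>z\<in>A a. f z) / real (card (A a)))
      = c * (if A a = {} then 1 else 0) + (\<Sum>z\<in>E. f z * (if a z then 1 / real (card {z\<in>E. a z}) else 0))" for a
  proof (cases "A a = {}")
    case True
    then show ?thesis unfolding A_def by (auto intro!: sum.neutral)
  next
    case False
    have "(\<Sum>z\<in>E. f z * (if a z then 1 / real (card {z\<in>E. a z}) else 0)) = (\<Sum>z\<in>{z\<in>E. a z}. f z / real (card {z\<in>E. a z}))"
      using sum.inter_filter[OF finE, of "\<lambda>z. f z / real (card {z\<in>E. a z})" a] by (simp add: if_distrib cong: if_cong)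
    also have "\<dots> = (\<Sum>z\<in>A a. f z) / real (card (A a))" unfolding A_def by (simp add: sum_divide_distrib)
    finally show ?thesis using False by simp
  qed
  have "measure_pmf.expectation D (\<lambda>a. if A a = {} then c else (\<Sum>z\<in>A a. f z) / real (card (A a)))
     = measure_pmf.expectation D (\<lambda>a. c * (if A a = {} then 1 else 0) + (\<Sum>z\<in>E. f z * (if a z then 1 / real (card {z\<in>E. a z}) else 0)))"
    using integrand by simp
  also have "\<dots> = c * measure_pmf.expectation D (\<lambda>a. if A a = {} then 1 else 0) + (\<Sum>z\<in>E. f z * w z)"
    unfolding w_def using int0 int1
    by (subst Bochner_Integration.integral_add) (auto intro!: Bochner_Integration.integrable_sum simp: integral_sum)
  also have "\<dots> = c * (1 - p) ^ card E + (\<Sum>z\<in>E. f z * w z0)"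
    using pi_allfalse[OF fin EI p] wz unfolding D_def A_def by simp
  also have "\<dots> = (1 - p) ^ card E * c + (1 - (1 - p) ^ card E) / real (card E) * (\<Sum>z\<in>E. f z)"
    using w0 by (simp add: sum_distrib_right sum_divide_distrib mult.commute)
  finally show ?thesis unfolding D_def A_def .
qed



lemma finite_pedges: "finite (pedges lam m)"
proof -
  have "pedges lam m \<subseteq> (SIGMA i:{..<2*m}. {1..lam i})" unfolding pedges_def by auto
  thus ?thesis by (rule finite_subset) auto
qed

definition Ev :: "(nat \<Rightarrow> nat) \<Rightarrow> nat \<Rightarrow> pvertex \<times> edge set \<Rightarrow> edge set" where
  "Ev lam m s = {e \<in> pedges lam m. e \<notin> snd s \<and> incident lam e (fst s)}"

definition mv :: "(nat \<Rightarrow> nat) \<Rightarrow> pvertex \<times> edge set \<Rightarrow> edge \<Rightarrow> pvertex \<times> edge set" where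
  "mv lam s e = (other_end lam e (fst s), insert e (snd s))"

definition rstep :: "(nat \<Rightarrow> nat) \<Rightarrow> nat \<Rightarrow> real \<Rightarrow> pvertex \<times> edge set \<Rightarrow> (pvertex \<times> edge set) pmf" where
  "rstep lam m p s = bind_pmf (activation_pmf lam m p)
     (\<lambda>a. if {e \<in> Ev lam m s. a e} = {} then return_pmf s
          else map_pmf (mv lam s) (pmf_of_set {e \<in> Ev lam m s. a e}))"

definition rchain :: "(nat \<Rightarrow> nat) \<Rightarrow> nat \<Rightarrow> real \<Rightarrow> nat \<Rightarrow> (pvertex \<times> edge set) pmf" where
  "rchain lam m p t = ((\<lambda>d. bind_pmf d (rstep lam m p)) ^^ t) (return_pmf (VO, {}))"

definition red :: "config \<Rightarrow> pvertex \<times> edge set" where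
  "red c = (fst c, fst (snd c))"

lemma finite_Ev: "finite (Ev lam m s)"
  unfolding Ev_def using finite_pedges by auto

lemma stage_red: "map_pmf red (stage lam m p (uniform_eulerian lam m) c) = rstep lam m p (red c)"
proof -
  obtain pos trav hist where c: "c = (pos, trav, hist)" by (cases c) auto
  show ?thesis
    unfolding c stage_def prod.case rstep_def map_bind_pmf
  proof (rule bind_pmf_cong[OF refl])
    fix a :: activation
    define A where "A = {e \<in> pedges lam m. a e \<and> e \<notin> trav \<and> incident lam e pos}"
    have AE: "{e \<in> Ev lam m (red (pos, trav, hist)). a e} = A"
      unfolding A_def Ev_def red_def by auto
    have finA: "finite A" unfolding A_def using finite_pedges by auto
    have ue: "uniform_eulerian lam m (pos, trav, hist) a = (if A = {} then return_pmf None else map_pmf Some (pmf_of_set A))"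
      unfolding uniform_eulerian_def A_def by simp
    show "uniform_eulerian lam m (pos, trav, hist) a \<bind>
            (\<lambda>mo. map_pmf red (return_pmf
                  (case mo of None \<Rightarrow> (pos, trav, hist @ [(pos, a, None)])
                   | Some e \<Rightarrow>
                       if e \<in> pedges lam m \<and> a e \<and> incident lam e pos
                       then (other_end lam e pos, insert e trav, hist @ [(pos, a, Some e)])
                       else (pos, trav, hist @ [(pos, a, None)])))) =
          (if {e \<in> Ev lam m (red (pos, trav, hist)). a e} = {} then return_pmf (red (pos, trav, hist))
           else map_pmf (mv lam (red (pos, trav, hist))) (pmf_of_set {e \<in> Ev lam m (red (pos, trav, hist)). a e}))"
    proof (cases "A = {}")
      case True
      then show ?thesis unfolding AE ue by (simp add: red_def bind_return_pmf)
    next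
      case False
      have "map_pmf Some (pmf_of_set A) \<bind>
            (\<lambda>mo. map_pmf red (return_pmf
                  (case mo of None \<Rightarrow> (pos, trav, hist @ [(pos, a, None)])
                   | Some e \<Rightarrow>
                       if e \<in> pedges lam m \<and> a e \<and> incident lam e pos
                       then (other_end lam e pos, insert e trav, hist @ [(pos, a, Some e)])
                       else (pos, trav, hist @ [(pos, a, None)]))))
          = map_pmf (\<lambda>e. red (if e \<in> pedges lam m \<and> a e \<and> incident lam e pos
                       then (other_end lam e pos, insert e trav, hist @ [(pos, a, Some e)])
                       else (pos, trav, hist @ [(pos, a, None)]))) (pmf_of_set A)"
        by (simp add: map_pmf_def bind_assoc_pmf bind_return_pmf)
      also have "\<dots> = map_pmf (mv lam (red (pos, trav, hist))) (pmf_of_set A)"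
      proof (rule map_pmf_cong[OF refl])
        fix e assume "e \<in> set_pmf (pmf_of_set A)"
        hence "e \<in> A" using False finA by simp
        thus "red (if e \<in> pedges lam m \<and> a e \<and> incident lam e pos
                       then (other_end lam e pos, insert e trav, hist @ [(pos, a, Some e)])
                       else (pos, trav, hist @ [(pos, a, None)])) = mv lam (red (pos, trav, hist)) e"
          unfolding A_def mv_def red_def by simp
      qed
      finally show ?thesis unfolding AE ue using False by simp
    qed
  qed
qed

lemma config_rchain: "map_pmf red (config_dist lam m p (uniform_eulerian lam m) t) = rchain lam m p t"
proof (induction t)
  case 0
  then show ?case by (simp add: config_dist_def rchain_def red_def)
next
  case (Suc t)
  have "map_pmf red (config_dist lam m p (uniform_eulerian lam m) (Suc t))
      = bind_pmf (config_dist lam m p (uniform_eulerian lam m) t) (\<lambda>c. map_pmf red (stage lam m p (uniform_eulerian lam m) c))"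
    by (simp add: config_dist_def map_bind_pmf)
  also have "\<dots> = bind_pmf (config_dist lam m p (uniform_eulerian lam m) t) (\<lambda>c. rstep lam m p (red c))"
    by (simp add: stage_red)
  also have "\<dots> = bind_pmf (map_pmf red (config_dist lam m p (uniform_eulerian lam m) t)) (rstep lam m p)"
    by (simp add: bind_map_pmf)
  also have "\<dots> = rchain lam m p (Suc t)" using Suc by (simp add: rchain_def)
  finally show ?case .
qed

lemma prob_red: "measure_pmf.prob (config_dist lam m p (uniform_eulerian lam m) t) {c. e \<notin> fst (snd c)}
   = measure_pmf.prob (rchain lam m p t) {s. e \<notin> snd s}"
proof -
  have "measure_pmf.prob (rchain lam m p t) {s. e \<notin> snd s}
     = measure_pmf.prob (config_dist lam m p (uniform_eulerian lam m) t) (red -` {s. e \<notin> snd s})"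
    by (simp add: config_rchain[symmetric])
  also have "red -` {s. e \<notin> snd s} = {c. e \<notin> fst (snd c)}" by (auto simp: red_def)
  finally show ?thesis by simp
qed



lemma finite_set_act: "finite (set_pmf (activation_pmf lam m p))"
proof -
  have "set_pmf (activation_pmf lam m p) \<subseteq> {f. \<forall>x. x \<notin> pedges lam m \<longrightarrow> f x = False}"
    unfolding activation_pmf_def by (rule set_Pi_pmf_subset[OF finite_pedges])
  also have "\<dots> \<subseteq> (\<lambda>S x. x \<in> S) ` Pow (pedges lam m)"
  proof
    fix f :: activation assume "f \<in> {f. \<forall>x. x \<notin> pedges lam m \<longrightarrow> f x = False}"
    hence "f = (\<lambda>x. x \<in> {x \<in> pedges lam m. f x})" by (intro ext) blast
    thus "f \<in> (\<lambda>S x. x \<in> S) ` Pow (pedges lam m)" by blast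
  qed
  finally show ?thesis by (rule finite_subset) (simp add: finite_pedges)
qed

lemma set_rstep: "set_pmf (rstep lam m p s) \<subseteq> insert s (mv lam s ` Ev lam m s)"
  unfolding rstep_def using finite_Ev[of lam m s]
  by (auto split: if_splits simp: set_pmf_of_set)

lemma finite_set_rstep: "finite (set_pmf (rstep lam m p s))"
  by (rule finite_subset[OF set_rstep]) (simp add: finite_Ev)

lemma rstep_empty: "Ev lam m s = {} \<Longrightarrow> rstep lam m p s = return_pmf s"
  unfolding rstep_def by simp

lemma rstep_expect:
  fixes h :: "pvertex \<times> edge set \<Rightarrow> real"
  assumes p: "0 \<le> p" "p \<le> 1" and ne: "Ev lam m s \<noteq> {}"
  shows "measure_pmf.expectation (rstep lam m p s) h
    = (1 - p) ^ card (Ev lam m s) * h s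
      + (1 - (1 - p) ^ card (Ev lam m s)) / real (card (Ev lam m s)) * (\<Sum>e\<in>Ev lam m s. h (mv lam s e))"
proof -
  define S where "S = set_pmf (activation_pmf lam m p)"
  define N where "N = (\<lambda>a. if {e \<in> Ev lam m s. a e} = {} then return_pmf s
          else map_pmf (mv lam s) (pmf_of_set {e \<in> Ev lam m s. a e}))"
  have finS: "finite S" unfolding S_def by (rule finite_set_act)
  have finN: "finite (set_pmf (N a))" for a
    unfolding N_def using finite_Ev[of lam m s] by (auto simp: set_pmf_of_set)
  have EN: "measure_pmf.expectation (N a) h =
     (if {e \<in> Ev lam m s. a e} = {} then h s else (\<Sum>e\<in>{e \<in> Ev lam m s. a e}. h (mv lam s e)) / real (card {e \<in> Ev lam m s. a e}))" for a
    unfolding N_def using finite_Ev[of lam m s] by (auto simp: integral_pmf_of_set)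
  have "measure_pmf.expectation (rstep lam m p s) h = (\<Sum>a\<in>S. pmf (activation_pmf lam m p) a *\<^sub>R measure_pmf.expectation (N a) h)"
    unfolding rstep_def N_def[symmetric] by (rule pmf_expectation_bind[OF finS]) (auto simp: finN S_def)
  also have "\<dots> = measure_pmf.expectation (activation_pmf lam m p) (\<lambda>a. measure_pmf.expectation (N a) h)"
    by (rule integral_measure_pmf[OF finS, symmetric]) (auto simp: S_def)
  also have "\<dots> = measure_pmf.expectation (activation_pmf lam m p)
     (\<lambda>a. if {e \<in> Ev lam m s. a e} = {} then h s else (\<Sum>e\<in>{e \<in> Ev lam m s. a e}. h (mv lam s e)) / real (card {e \<in> Ev lam m s. a e}))"
    by (simp only: EN)
  also have "\<dots> = (1 - p) ^ card (Ev lam m s) * h s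
      + (1 - (1 - p) ^ card (Ev lam m s)) / real (card (Ev lam m s)) * (\<Sum>e\<in>Ev lam m s. h (mv lam s e))"
    unfolding activation_pmf_def
    by (rule pi_choice[OF finite_pedges _ ne p]) (auto simp: Ev_def)
  finally show ?thesis .
qed



locale PG =
  fixes lam :: "nat \<Rightarrow> nat" and m :: nat
  assumes lpos: "\<And>i. i < 2 * m \<Longrightarrow> lam i > 0"
begin

definition pe :: "nat set \<Rightarrow> edge set" where
  "pe F = {(i, j). i \<in> F \<and> 1 \<le> j \<and> j \<le> lam i}"

definition seg :: "nat \<Rightarrow> nat \<Rightarrow> nat \<Rightarrow> edge set" where
  "seg i a b = {(i', j). i' = i \<and> a \<le> j \<and> j \<le> b}"

definition fe :: "pvertex \<Rightarrow> nat \<Rightarrow> edge" where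
  "fe v i = (i, if v = VO then 1 else lam i)"

definition Inv :: "pvertex \<times> edge set \<Rightarrow> bool" where
  "Inv s \<longleftrightarrow> (\<exists>F \<subseteq> {..<2*m}.
      (\<exists>v \<in> {VO, VD}. s = (v, pe F)) \<or>
      (\<exists>i t. i < 2*m \<and> i \<notin> F \<and> 1 \<le> t \<and> t < lam i \<and>
         (s = (Mid i t, pe F \<union> seg i 1 t) \<or> s = (Mid i t, pe F \<union> seg i (t+1) (lam i)))))"

lemma vtx0[simp]: "vtx lam i 0 = VO" by (simp add: vtx_def)
lemma vtxL[simp]: "lam i > 0 \<Longrightarrow> vtx lam i (lam i) = VD" by (simp add: vtx_def)
lemma vtxM: "0 < j \<Longrightarrow> j < lam i \<Longrightarrow> vtx lam i j = Mid i j" by (simp add: vtx_def)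

lemma incident_VO: "e \<in> pedges lam m \<Longrightarrow> incident lam e VO \<longleftrightarrow> snd e = 1"
  by (cases e) (auto simp: incident_def end1_def end2_def vtx_def pedges_def)

lemma incident_VD: "e \<in> pedges lam m \<Longrightarrow> incident lam e VD \<longleftrightarrow> snd e = lam (fst e)"
  by (cases e) (auto simp: incident_def end1_def end2_def vtx_def pedges_def)

lemma incident_Mid: "e \<in> pedges lam m \<Longrightarrow> 1 \<le> t \<Longrightarrow> t < lam i \<Longrightarrow>
   incident lam e (Mid i t) \<longleftrightarrow> (e = (i, t) \<or> e = (i, t + 1))"
  by (cases e) (auto simp: incident_def end1_def end2_def vtx_def pedges_def)

lemma pe_insert: "pe (insert i F) = pe F \<union> seg i 1 (lam i)"
  unfolding pe_def seg_def by auto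

lemma in_pedges: "i < 2 * m \<Longrightarrow> 1 \<le> j \<Longrightarrow> j \<le> lam i \<Longrightarrow> (i, j) \<in> pedges lam m"
  unfolding pedges_def by auto

lemma Ev_V:
  assumes F: "F \<subseteq> {..<2*m}" and v: "v \<in> {VO, VD}"
  shows "Ev lam m (v, pe F) = fe v ` ({..<2*m} - F)"
proof
  show "Ev lam m (v, pe F) \<subseteq> fe v ` ({..<2*m} - F)"
  proof
    fix e assume e: "e \<in> Ev lam m (v, pe F)"
    obtain i j where ij: "e = (i, j)" by (cases e)
    from e have ep: "e \<in> pedges lam m" and nt: "e \<notin> pe F" and inc: "incident lam e v"
      unfolding Ev_def by auto
    from ep have i: "i < 2*m" "1 \<le> j" "j \<le> lam i" unfolding ij pedges_def by auto
    from nt i have "i \<notin> F" unfolding ij pe_def by auto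
    moreover have "e = fe v i"
      using v inc incident_VO[OF ep] incident_VD[OF ep] unfolding ij fe_def by auto
    ultimately show "e \<in> fe v ` ({..<2*m} - F)" using i by auto
  qed
next
  show "fe v ` ({..<2*m} - F) \<subseteq> Ev lam m (v, pe F)"
  proof
    fix e assume "e \<in> fe v ` ({..<2*m} - F)"
    then obtain i where i: "i < 2*m" "i \<notin> F" and e: "e = fe v i" by auto
    have l: "lam i > 0" using lpos i by auto
    have ep: "e \<in> pedges lam m" using i l unfolding e fe_def pedges_def by auto
    moreover have "e \<notin> pe F" using i unfolding e fe_def pe_def by auto
    moreover have "incident lam e v"
      using v incident_VO[OF ep] incident_VD[OF ep] unfolding e fe_def by auto
    ultimately show "e \<in> Ev lam m (v, pe F)" unfolding Ev_def by auto
  qed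
qed

lemma inj_fe: "inj_on (fe v) A" unfolding fe_def inj_on_def by auto

lemma mv_VO:
  assumes "i < 2*m"
  shows "mv lam (VO, pe F) (fe VO i) = (vtx lam i 1, insert (i, 1) (pe F))"
  unfolding mv_def fe_def other_end_def end1_def end2_def by simp

lemma mv_VD:
  assumes "i < 2*m"
  shows "mv lam (VD, pe F) (fe VD i) = (vtx lam i (lam i - 1), insert (i, lam i) (pe F))"
proof -
  have "vtx lam i (lam i - 1) \<noteq> VD" unfolding vtx_def by (cases "lam i") auto
  thus ?thesis unfolding mv_def fe_def other_end_def end1_def end2_def by auto
qed

lemma Ev_MO:
  assumes i: "i < 2*m" "i \<notin> F" and t: "1 \<le> t" "t < lam i"
  shows "Ev lam m (Mid i t, pe F \<union> seg i 1 t) = {(i, t + 1)}"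
  unfolding Ev_def using i t incident_Mid[OF _ t] in_pedges[of i "t+1" ] in_pedges[of i t]
  by (auto simp: pe_def seg_def)

lemma mv_MO:
  assumes i: "i < 2*m" and t: "1 \<le> t" "t < lam i"
  shows "mv lam (Mid i t, pe F \<union> seg i 1 t) (i, t + 1) = (vtx lam i (t + 1), pe F \<union> seg i 1 (t + 1))"
proof -
  have "vtx lam i t = Mid i t" using t by (simp add: vtx_def)
  moreover have "insert (i, t+1) (pe F \<union> seg i 1 t) = pe F \<union> seg i 1 (t + 1)" by (auto simp: seg_def)
  ultimately show ?thesis unfolding mv_def other_end_def end1_def end2_def by simp
qed

lemma Ev_MD:
  assumes i: "i < 2*m" "i \<notin> F" and t: "1 \<le> t" "t < lam i"
  shows "Ev lam m (Mid i t, pe F \<union> seg i (t + 1) (lam i)) = {(i, t)}"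
  unfolding Ev_def using i t incident_Mid[OF _ t] in_pedges[of i "t+1" ] in_pedges[of i t]
  by (auto simp: pe_def seg_def)

lemma mv_MD:
  assumes i: "i < 2*m" and t: "1 \<le> t" "t < lam i"
  shows "mv lam (Mid i t, pe F \<union> seg i (t + 1) (lam i)) (i, t) = (vtx lam i (t - 1), pe F \<union> seg i t (lam i))"
proof -
  have "vtx lam i t = Mid i t" using t by (simp add: vtx_def)
  moreover have "vtx lam i (t - 1) \<noteq> Mid i t" unfolding vtx_def by (cases t) auto
  moreover have "insert (i, t) (pe F \<union> seg i (t + 1) (lam i)) = pe F \<union> seg i t (lam i)" using t by (auto simp: seg_def)
  ultimately show ?thesis unfolding mv_def other_end_def end1_def end2_def by auto
qed

lemma InvV: "F \<subseteq> {..<2*m} \<Longrightarrow> v \<in> {VO, VD} \<Longrightarrow> Inv (v, pe F)"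
  unfolding Inv_def by blast
lemma InvMO: "F \<subseteq> {..<2*m} \<Longrightarrow> i < 2*m \<Longrightarrow> i \<notin> F \<Longrightarrow> 1 \<le> t \<Longrightarrow> t < lam i \<Longrightarrow> Inv (Mid i t, pe F \<union> seg i 1 t)"
  unfolding Inv_def by blast
lemma InvMD: "F \<subseteq> {..<2*m} \<Longrightarrow> i < 2*m \<Longrightarrow> i \<notin> F \<Longrightarrow> 1 \<le> t \<Longrightarrow> t < lam i \<Longrightarrow> Inv (Mid i t, pe F \<union> seg i (t+1) (lam i))"
  unfolding Inv_def by blast

lemma Inv_step:
  assumes "Inv s" and "s' \<in> set_pmf (rstep lam m p s)"
  shows "Inv s'"
proof -
  from assms(2) set_rstep have "s' = s \<or> (\<exists>e \<in> Ev lam m s. s' = mv lam s e)" by blast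
  moreover
  obtain F where F: "F \<subseteq> {..<2*m}" and cases:
     "(\<exists>v \<in> {VO, VD}. s = (v, pe F)) \<or>
      (\<exists>i t. i < 2*m \<and> i \<notin> F \<and> 1 \<le> t \<and> t < lam i \<and>
         (s = (Mid i t, pe F \<union> seg i 1 t) \<or> s = (Mid i t, pe F \<union> seg i (t+1) (lam i))))"
    using assms(1) unfolding Inv_def by blast
  have "Inv (mv lam s e)" if e: "e \<in> Ev lam m s" for e
  proof -
    have FI: "insert i F \<subseteq> {..<2*m}" if "i < 2*m" for i using F that by auto
    from cases show ?thesis
    proof (elim disjE exE conjE bexE)
      fix v assume v: "v \<in> {VO, VD}" and s: "s = (v, pe F)"
      from e obtain i where i: "i < 2*m" "i \<notin> F" and ei: "e = fe v i"
        unfolding s Ev_V[OF F v] by auto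
      have l: "lam i > 0" using lpos i by auto
      show ?thesis
      proof (cases "v = VO")
        case True
        show ?thesis
        proof (cases "lam i = 1")
          case True
          have "mv lam s e = (VD, pe (insert i F))"
            unfolding s ei `v = VO` mv_VO[OF i(1)] pe_insert using True by (auto simp: vtx_def seg_def)
          thus ?thesis using InvV[OF FI[OF i(1)]] by simp
        next
          case False
          have "mv lam s e = (Mid i 1, pe F \<union> seg i 1 1)"
            unfolding s ei `v = VO` mv_VO[OF i(1)] using False l by (auto simp: vtx_def seg_def)
          thus ?thesis using InvMO[OF F i, of 1] False l by simp
        qed
      next
        case False
        hence vD: "v = VD" using v by auto
        show ?thesis
        proof (cases "lam i = 1")
          case True
          have "mv lam s e = (VO, pe (insert i F))"
            unfolding s ei vD mv_VD[OF i(1)] pe_insert using True by (auto simp: vtx_def seg_def)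
          thus ?thesis using InvV[OF FI[OF i(1)]] by simp
        next
          case False
          have "mv lam s e = (Mid i (lam i - 1), pe F \<union> seg i (lam i - 1 + 1) (lam i))"
            unfolding s ei vD mv_VD[OF i(1)] using False l by (auto simp: vtx_def seg_def)
          thus ?thesis using InvMD[OF F i, of "lam i - 1"] False l by simp
        qed
      qed
    next
      fix i t assume i: "i < 2*m" "i \<notin> F" and t: "1 \<le> t" "t < lam i" and s: "s = (Mid i t, pe F \<union> seg i 1 t)"
      have ei: "e = (i, t+1)" using e unfolding s Ev_MO[OF i t] by simp
      show ?thesis
      proof (cases "t + 1 = lam i")
        case True
        have "mv lam s e = (VD, pe (insert i F))"
          unfolding s ei mv_MO[OF i(1) t] pe_insert using True t by (simp add: vtx_def)
        thus ?thesis using InvV[OF FI[OF i(1)]] by simp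
      next
        case False
        have "mv lam s e = (Mid i (t+1), pe F \<union> seg i 1 (t+1))"
          unfolding s ei mv_MO[OF i(1) t] using False t by (simp add: vtx_def)
        thus ?thesis using InvMO[OF F i, of "t+1"] False t by simp
      qed
    next
      fix i t assume i: "i < 2*m" "i \<notin> F" and t: "1 \<le> t" "t < lam i" and s: "s = (Mid i t, pe F \<union> seg i (t+1) (lam i))"
      have ei: "e = (i, t)" using e unfolding s Ev_MD[OF i t] by simp
      show ?thesis
      proof (cases "t = 1")
        case True
        have "mv lam s e = (VO, pe (insert i F))"
          unfolding s ei mv_MD[OF i(1) t] pe_insert using True t by (simp add: vtx_def)
        thus ?thesis using InvV[OF FI[OF i(1)]] by simp
      next
        case False
        have "mv lam s e = (Mid i (t-1), pe F \<union> seg i (t - 1 + 1) (lam i))"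
          unfolding s ei mv_MD[OF i(1) t] using False t by (simp add: vtx_def)
        thus ?thesis using InvMD[OF F i, of "t-1"] False t by simp
      qed
    qed
  qed
  ultimately show ?thesis using assms(1) by blast
qed

end



fun Hs :: "real \<Rightarrow> nat \<Rightarrow> real" where
  "Hs p 0 = 0"
| "Hs p (Suc k) = 1 / (1 - (1 - p) ^ Suc k) + real k / real (Suc k) * Hs p k"

definition PV :: "nat \<Rightarrow> real" where
  "PV k = real ((k + 1) div 2) / real k"

definition oth :: "pvertex \<Rightarrow> pvertex" where
  "oth v = (if v = VO then VD else VO)"

locale PG2 = PG +
  fixes p :: real and i0 j0 :: nat
  assumes p0: "0 < p" and p1: "p \<le> 1" and i0: "i0 < 2 * m" and j0: "1 \<le> j0" "j0 \<le> lam i0"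
begin

definition w :: "nat \<Rightarrow> real" where "w i = (real (lam i) - 1) / p"

definition dist :: "pvertex \<Rightarrow> real" where
  "dist v = (if v = VO then (real j0 - 1) / p else (real (lam i0) - real j0) / p)"

definition V :: "pvertex \<Rightarrow> nat set \<Rightarrow> real" where
  "V v U = Hs p (card U) + (\<Sum>i\<in>U - {i0}. w i) / 2 + PV (card U) * dist v + (1 - PV (card U)) * dist (oth v)"

definition Untr :: "edge set \<Rightarrow> nat set" where
  "Untr T = {i. i < 2 * m \<and> (i, 1) \<notin> T \<and> (i, lam i) \<notin> T}"

definition g :: "pvertex \<times> edge set \<Rightarrow> real" where
  "g s = (case fst s of
      VO \<Rightarrow> V VO (Untr (snd s))
    | VD \<Rightarrow> V VD (Untr (snd s))
    | Mid i t \<Rightarrow> (if (i, t) \<in> snd s then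
          (if i = i0 then (real j0 - real t) / p else (real (lam i) - real t) / p + V VD (Untr (snd s)))
        else
          (if i = i0 then (real t + 1 - real j0) / p else real t / p + V VO (Untr (snd s)))))"

definition G :: "pvertex \<times> edge set \<Rightarrow> real" where
  "G s = (if (i0, j0) \<in> snd s then 0 else g s)"

lemma Vrec:
  assumes fin: "finite U" and iU: "i0 \<in> U" and v: "v \<in> {VO, VD}"
  shows "V v U = 1 / (1 - (1 - p) ^ card U)
     + (dist v + (\<Sum>i\<in>U - {i0}. w i + V (oth v) (U - {i}))) / real (card U)"
proof -
  define k where "k = card U"
  define S where "S = (\<Sum>i\<in>U - {i0}. w i)"
  have k1: "k \<ge> 1" using fin iU unfolding k_def by (metis One_nat_def Suc_leI card_gt_0_iff empty_iff)
  obtain k' where k': "k = Suc k'" using k1 by (cases k) auto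
  have ov: "oth (oth v) = v" using v by (auto simp: oth_def)
  define C where "C = PV k' * dist (oth v) + (1 - PV k') * dist v"
  have Vi: "V (oth v) (U - {i}) = Hs p k' + (S - w i) / 2 + C" if i: "i \<in> U - {i0}" for i
  proof -
    have "card (U - {i}) = k'" using i fin k' unfolding k_def by simp
    moreover have "(\<Sum>j\<in>(U - {i}) - {i0}. w j) = S - w i"
    proof -
      have "(U - {i}) - {i0} = (U - {i0}) - {i}" by auto
      thus ?thesis unfolding S_def using i fin by (simp add: sum_diff1)
    qed
    ultimately show ?thesis unfolding V_def C_def ov by simp
  qed
  have cU: "card (U - {i0}) = k'" using iU fin k' unfolding k_def by simp
  have sumeq: "(\<Sum>i\<in>U - {i0}. w i + V (oth v) (U - {i}))
      = S + real k' * (Hs p k' + C) + (real k' * S - S) / 2"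
  proof -
    have "(\<Sum>i\<in>U - {i0}. w i + V (oth v) (U - {i})) = (\<Sum>i\<in>U - {i0}. w i / 2 + (S / 2 + Hs p k' + C))"
      by (rule sum.cong) (auto simp: Vi field_simps)
    also have "\<dots> = S / 2 + real k' * (S / 2 + Hs p k' + C)"
      using cU unfolding S_def by (simp add: sum.distrib sum_divide_distrib)
    finally show ?thesis by (simp add: field_simps)
  qed
  have PVk: "real k * PV k = real ((k + 1) div 2)" using k1 unfolding PV_def by simp
  have PVk': "real k' * PV k' = real (k div 2)"
    unfolding PV_def k' by (cases k') auto
  have par: "real ((k + 1) div 2) + real (k div 2) = real k"
  proof -
    have "(k + 1) div 2 + k div 2 = k" by presburger
    thus ?thesis by (metis of_nat_add)
  qed
  have Hk: "Hs p k = 1 / (1 - (1 - p) ^ k) + real k' / real k * Hs p k'" unfolding k' by simp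
  have kpos: "real k > 0" using k1 by simp
  have "V v U = Hs p k + S / 2 + PV k * dist v + (1 - PV k) * dist (oth v)"
    unfolding V_def k_def S_def by simp
  also have "\<dots> = 1 / (1 - (1 - p) ^ k) + (dist v + (S + real k' * (Hs p k' + C) + (real k' * S - S) / 2)) / real k"
  proof -
    have e1: "real k = real k' + 1" unfolding k' by simp
    have "real k * (PV k * dist v + (1 - PV k) * dist (oth v))
        = dist v + real k' * C"
    proof -
      have "real k * (PV k * dist v + (1 - PV k) * dist (oth v))
          = (real k * PV k) * dist v + (real k - real k * PV k) * dist (oth v)"
        by (simp add: algebra_simps)
      also have "\<dots> = real ((k + 1) div 2) * dist v + (real k - real ((k + 1) div 2)) * dist (oth v)"
        by (simp only: PVk)
      also have "\<dots> = real ((k + 1) div 2) * dist v + real (k div 2) * dist (oth v)"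
        using par by simp
      also have "real k' * C = real (k div 2) * dist (oth v) + (real k' - real (k div 2)) * dist v"
      proof -
        have "real k' * C = (real k' * PV k') * dist (oth v) + (real k' - real k' * PV k') * dist v"
          unfolding C_def by (simp add: algebra_simps)
        thus ?thesis by (simp only: PVk')
      qed
      moreover have "real k' - real (k div 2) = real ((k + 1) div 2) - 1" using par e1 by simp
      ultimately show ?thesis by (simp add: algebra_simps)
    qed
    then show ?thesis unfolding Hk using kpos e1 by (simp add: field_simps)
  qed
  finally show ?thesis unfolding sumeq k_def .
qed

end



context PG2 begin

lemma lam_pos: "i < 2 * m \<Longrightarrow> 1 \<le> lam i" using lpos[of i] by simp

lemma UntrV: "F \<subseteq> {..<2*m} \<Longrightarrow> Untr (pe F) = {..<2*m} - F"
  unfolding Untr_def pe_def using lam_pos by fastforce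

lemma UntrMO: "F \<subseteq> {..<2*m} \<Longrightarrow> 1 \<le> t \<Longrightarrow> Untr (pe F \<union> seg i 1 t) = {..<2*m} - F - {i}"
  unfolding Untr_def pe_def seg_def using lam_pos by fastforce

lemma UntrMD: "F \<subseteq> {..<2*m} \<Longrightarrow> t < lam i \<Longrightarrow> Untr (pe F \<union> seg i (t+1) (lam i)) = {..<2*m} - F - {i}"
  unfolding Untr_def pe_def seg_def using lam_pos by fastforce

lemma e0pe: "(i0, j0) \<in> pe F \<longleftrightarrow> i0 \<in> F"
  unfolding pe_def using j0 by auto

lemma e0seg: "(i0, j0) \<in> seg i a b \<longleftrightarrow> i = i0 \<and> a \<le> j0 \<and> j0 \<le> b"
  unfolding seg_def by auto

lemma gV: "F \<subseteq> {..<2*m} \<Longrightarrow> v \<in> {VO, VD} \<Longrightarrow> g (v, pe F) = V v ({..<2*m} - F)"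
  unfolding g_def using UntrV by auto

lemma gMO: "F \<subseteq> {..<2*m} \<Longrightarrow> 1 \<le> t \<Longrightarrow>
  g (Mid i t, pe F \<union> seg i 1 t) = (if i = i0 then (real j0 - real t) / p else (real (lam i) - real t) / p + V VD ({..<2*m} - F - {i}))"
  unfolding g_def using UntrMO[of F t i] by (auto simp: seg_def)

lemma gMD: "F \<subseteq> {..<2*m} \<Longrightarrow> i \<notin> F \<Longrightarrow> t < lam i \<Longrightarrow>
  g (Mid i t, pe F \<union> seg i (t+1) (lam i)) = (if i = i0 then (real t + 1 - real j0) / p else real t / p + V VO ({..<2*m} - F - {i}))"
  unfolding g_def using UntrMD[of F t i] by (auto simp: seg_def pe_def)

lemma succV:
  assumes i: "i < 2*m" and v: "v \<in> {VO, VD}"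
  shows "mv lam (v, pe F) (fe v i) = (if lam i = 1 then (oth v, pe (insert i F))
     else if v = VO then (Mid i 1, pe F \<union> seg i 1 1) else (Mid i (lam i - 1), pe F \<union> seg i (lam i - 1 + 1) (lam i)))"
proof -
  have l: "lam i > 0" using lpos i by auto
  show ?thesis
  proof (cases "v = VO")
    case True
    then show ?thesis using mv_VO[OF i, of F] l unfolding pe_insert by (auto simp: vtx_def seg_def oth_def)
  next
    case False
    hence "v = VD" using v by auto
    then show ?thesis using mv_VD[OF i, of F] l unfolding pe_insert by (auto simp: vtx_def seg_def oth_def)
  qed
qed

lemma succMO:
  assumes i: "i < 2*m" and t: "1 \<le> t" "t < lam i"
  shows "mv lam (Mid i t, pe F \<union> seg i 1 t) (i, t + 1) = (if t + 1 = lam i then (VD, pe (insert i F))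
     else (Mid i (t+1), pe F \<union> seg i 1 (t+1)))"
  using mv_MO[OF i t, of F] t unfolding pe_insert by (auto simp: vtx_def)

lemma succMD:
  assumes i: "i < 2*m" and t: "1 \<le> t" "t < lam i"
  shows "mv lam (Mid i t, pe F \<union> seg i (t + 1) (lam i)) (i, t) = (if t = 1 then (VO, pe (insert i F))
     else (Mid i (t - 1), pe F \<union> seg i (t - 1 + 1) (lam i)))"
  using mv_MD[OF i t, of F] t unfolding pe_insert by (auto simp: vtx_def)

lemma GsuccV:
  assumes F: "F \<subseteq> {..<2*m}" and i: "i < 2*m" "i \<notin> F" and i0F: "i0 \<notin> F" and v: "v \<in> {VO, VD}"
  shows "G (mv lam (v, pe F) (fe v i)) = (if i = i0 then dist v else w i + V (oth v) ({..<2*m} - F - {i}))"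
proof -
  have FI: "insert i F \<subseteq> {..<2*m}" using F i by auto
  have l: "lam i \<ge> 1" using lam_pos i by auto
  have ov: "oth v \<in> {VO, VD}" by (auto simp: oth_def)
  have d1: "{..<2*m} - insert i F = {..<2*m} - F - {i}" by auto
  show ?thesis
  proof (cases "i = i0")
    case True
    show ?thesis
    proof (cases "lam i = 1")
      case True
      hence jj: "j0 = 1" "lam i0 = 1" using j0 `i = i0` by auto
      have "G (mv lam (v, pe F) (fe v i)) = 0"
        using True succV[OF i(1) v, of F] `i = i0` by (simp add: G_def e0pe)
      moreover have "dist v = 0" unfolding dist_def using jj by simp
      ultimately show ?thesis using `i = i0` by simp
    next
      case False
      show ?thesis
      proof (cases "v = VO")
        case True
        then show ?thesis using `i = i0` False succV[OF i(1) v, of F] gMO[OF F, of 1 i]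
          by (auto simp: G_def e0pe e0seg dist_def i0F)
      next
        case False
        hence vD: "v = VD" using v by auto
        have "lam i - 1 + 1 = lam i" using l by simp
        then show ?thesis using `i = i0` `lam i \<noteq> 1` vD succV[OF i(1) v, of F] gMD[OF F i(2), of "lam i - 1"] l
          by (auto simp: G_def e0pe e0seg dist_def i0F)
      qed
    qed
  next
    case False
    show ?thesis
    proof (cases "lam i = 1")
      case True
      have "G (mv lam (v, pe F) (fe v i)) = V (oth v) ({..<2*m} - F - {i})"
        using True succV[OF i(1) v, of F] gV[OF FI ov] False i0F d1 by (simp add: G_def e0pe)
      thus ?thesis using True False by (simp add: w_def)
    next
      case nl: False
      show ?thesis
      proof (cases "v = VO")
        case True
        then show ?thesis using False nl succV[OF i(1) v, of F] gMO[OF F, of 1 i]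
          by (auto simp: G_def e0pe e0seg w_def i0F oth_def)
      next
        case False
        hence vD: "v = VD" using v by auto
        have "lam i - 1 + 1 = lam i" using l by simp
        moreover have "real (lam i - 1) = real (lam i) - 1" using l by simp
        ultimately show ?thesis using `i \<noteq> i0` nl vD succV[OF i(1) v, of F] gMD[OF F i(2), of "lam i - 1"] l
          by (auto simp: G_def e0pe e0seg w_def i0F oth_def)
      qed
    qed
  qed
qed

end



context PG2 begin

lemma aa_inv: "k \<ge> 1 \<Longrightarrow> (1 - (1 - p) ^ k) * (1 / (1 - (1 - p) ^ k)) = 1"
proof -
  assume k: "k \<ge> 1"
  obtain n where n: "k = Suc n" using k by (cases k) auto
  have "(1 - p) ^ n \<le> 1" by (rule power_le_one) (use p0 p1 in auto)
  hence "(1 - p) * (1 - p) ^ n \<le> (1 - p) * 1" by (rule mult_left_mono) (use p1 in auto)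
  hence "(1 - p) ^ k < 1" unfolding n using p0 by simp
  thus ?thesis by simp
qed

lemma onestepV:
  assumes F: "F \<subseteq> {..<2*m}" and v: "v \<in> {VO, VD}" and e0: "(i0, j0) \<notin> pe F"
  shows "measure_pmf.expectation (rstep lam m p (v, pe F)) G = g (v, pe F) - 1"
proof -
  define U where "U = {..<2*m} - F"
  have i0F: "i0 \<notin> F" using e0 e0pe by simp
  have iU: "i0 \<in> U" unfolding U_def using i0 i0F by simp
  have finU: "finite U" unfolding U_def by simp
  define k where "k = card U"
  have k1: "k \<ge> 1" unfolding k_def using iU finU by (metis One_nat_def Suc_leI card_gt_0_iff empty_iff)
  have EvU: "Ev lam m (v, pe F) = fe v ` U" unfolding U_def by (rule Ev_V[OF F v])
  have cardEv: "card (Ev lam m (v, pe F)) = k" unfolding EvU k_def by (rule card_image[OF inj_fe])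
  have ne: "Ev lam m (v, pe F) \<noteq> {}" using EvU iU by auto
  define X where "X = dist v + (\<Sum>i\<in>U - {i0}. w i + V (oth v) (U - {i}))"
  have Gs: "G (v, pe F) = V v U" unfolding G_def using e0 gV[OF F v] U_def by simp
  have sumX: "(\<Sum>e\<in>Ev lam m (v, pe F). G (mv lam (v, pe F) e)) = X"
  proof -
    have "(\<Sum>e\<in>Ev lam m (v, pe F). G (mv lam (v, pe F) e)) = (\<Sum>i\<in>U. G (mv lam (v, pe F) (fe v i)))"
      unfolding EvU by (rule sum.reindex[OF inj_fe, unfolded comp_def])
    also have "\<dots> = (\<Sum>i\<in>U. if i = i0 then dist v else w i + V (oth v) (U - {i}))"
      by (rule sum.cong[OF refl]) (use GsuccV[OF F _ _ i0F v] in \<open>auto simp: U_def\<close>)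
    also have "\<dots> = X"
      unfolding X_def using sum.remove[OF finU iU, of "\<lambda>i. if i = i0 then dist v else w i + V (oth v) (U - {i})"]
      by simp
    finally show ?thesis .
  qed
  have VX: "V v U = 1 / (1 - (1 - p) ^ k) + X / real k"
    unfolding X_def k_def by (rule Vrec[OF finU iU v])
  have "measure_pmf.expectation (rstep lam m p (v, pe F)) G
     = (1 - p) ^ k * V v U + (1 - (1 - p) ^ k) / real k * X"
    using rstep_expect[of p lam m "(v, pe F)" G] p0 p1 ne unfolding cardEv Gs sumX by simp
  also have "\<dots> = (1 - p) ^ k * V v U + (1 - (1 - p) ^ k) * (V v U - 1 / (1 - (1 - p) ^ k))"
    using VX by simp
  also have "\<dots> = V v U - (1 - (1 - p) ^ k) * (1 / (1 - (1 - p) ^ k))"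
    by (simp add: algebra_simps)
  also have "\<dots> = V v U - 1" using aa_inv[OF k1] by simp
  finally show ?thesis using gV[OF F v] U_def by simp
qed

lemma onestep_single:
  assumes "Ev lam m s = {e}"
  shows "measure_pmf.expectation (rstep lam m p s) G = (1 - p) * G s + p * G (mv lam s e)"
  using rstep_expect[of p lam m s G] p0 p1 assms by simp

lemma onestepMO:
  assumes F: "F \<subseteq> {..<2*m}" and i: "i < 2*m" "i \<notin> F" and t: "1 \<le> t" "t < lam i"
    and e0: "(i0, j0) \<notin> pe F \<union> seg i 1 t"
  shows "measure_pmf.expectation (rstep lam m p (Mid i t, pe F \<union> seg i 1 t)) G = g (Mid i t, pe F \<union> seg i 1 t) - 1"
proof -
  define s where "s = (Mid i t, pe F \<union> seg i 1 t)"
  define W where "W = {..<2*m} - F - {i}"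
  have i0F: "i0 \<notin> F" using e0 e0pe by simp
  have Gs: "G s = g s" unfolding G_def s_def using e0 by simp
  have FI: "insert i F \<subseteq> {..<2*m}" using F i by auto
  have W': "{..<2*m} - insert i F = W" unfolding W_def by auto
  have key: "p * G (mv lam s (i, t + 1)) = p * g s - 1"
  proof (cases "i = i0")
    case False
    have gs: "g s = (real (lam i) - real t) / p + V VD W" unfolding s_def W_def using gMO[OF F t(1), of i] False by simp
    show ?thesis
    proof (cases "t + 1 = lam i")
      case True
      have "G (mv lam s (i, t + 1)) = V VD W"
        unfolding s_def succMO[OF i(1) t] using True gV[OF FI, of VD] W' False i0F by (simp add: G_def e0pe)
      moreover have "real (lam i) - real t = 1" using True by linarith
      ultimately show ?thesis using gs p0 by (simp add: field_simps)
    next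
      case nl: False
      have "G (mv lam s (i, t + 1)) = (real (lam i) - real (t + 1)) / p + V VD W"
        unfolding s_def succMO[OF i(1) t] using nl gMO[OF F, of "t+1" i] False i0F W_def
        by (simp add: G_def e0pe e0seg)
      thus ?thesis using gs p0 by (simp add: field_simps)
    qed
  next
    case True
    have tj: "t < j0" using e0 True j0(1) by (auto simp: e0seg)
    have gs: "g s = (real j0 - real t) / p" unfolding s_def using gMO[OF F t(1), of i] True by simp
    show ?thesis
    proof (cases "t + 1 = j0")
      case tj1: True
      have mem: "(i0, j0) \<in> snd (mv lam s (i, t + 1))"
      proof (cases "t + 1 = lam i")
        case True
        thus ?thesis unfolding s_def succMO[OF i(1) t] using `i = i0` by (simp add: e0pe)
      next
        case False
        have "1 \<le> j0 \<and> j0 \<le> t + 1" using tj1 j0 by simp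
        thus ?thesis unfolding s_def succMO[OF i(1) t] using False `i = i0` by (simp add: e0seg)
      qed
      have "G (mv lam s (i, t + 1)) = 0" using mem by (simp add: G_def)
      moreover have "real j0 - real t = 1" using tj1 by linarith
      ultimately show ?thesis using gs p0 by simp
    next
      case False
      have nl: "t + 1 \<noteq> lam i" using False tj j0 True by auto
      have "G (mv lam s (i, t + 1)) = (real j0 - real (t + 1)) / p"
        unfolding s_def succMO[OF i(1) t] using nl gMO[OF F, of "t+1" i] True i0F tj False
        by (simp add: G_def e0pe e0seg)
      thus ?thesis using gs p0 by (simp add: field_simps)
    qed
  qed
  have "measure_pmf.expectation (rstep lam m p s) G = (1 - p) * G s + p * G (mv lam s (i, t + 1))"
    by (rule onestep_single) (unfold s_def, rule Ev_MO[OF i t])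
  also have "\<dots> = g s - 1" using key Gs by (simp add: algebra_simps)
  finally show ?thesis unfolding s_def .
qed

lemma onestepMD:
  assumes F: "F \<subseteq> {..<2*m}" and i: "i < 2*m" "i \<notin> F" and t: "1 \<le> t" "t < lam i"
    and e0: "(i0, j0) \<notin> pe F \<union> seg i (t + 1) (lam i)"
  shows "measure_pmf.expectation (rstep lam m p (Mid i t, pe F \<union> seg i (t + 1) (lam i))) G
      = g (Mid i t, pe F \<union> seg i (t + 1) (lam i)) - 1"
proof -
  define s where "s = (Mid i t, pe F \<union> seg i (t + 1) (lam i))"
  define W where "W = {..<2*m} - F - {i}"
  have i0F: "i0 \<notin> F" using e0 e0pe by simp
  have Gs: "G s = g s" unfolding G_def s_def using e0 by simp
  have FI: "insert i F \<subseteq> {..<2*m}" using F i by auto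
  have W': "{..<2*m} - insert i F = W" unfolding W_def by auto
  have key: "p * G (mv lam s (i, t)) = p * g s - 1"
  proof (cases "i = i0")
    case False
    have gs: "g s = real t / p + V VO W" unfolding s_def W_def using gMD[OF F i(2) t(2)] False by simp
    show ?thesis
    proof (cases "t = 1")
      case True
      have "G (mv lam s (i, t)) = V VO W"
        unfolding s_def succMD[OF i(1) t] using True gV[OF FI, of VO] W' False i0F by (simp add: G_def e0pe)
      thus ?thesis using gs p0 True by (simp add: field_simps)
    next
      case t1: False
      have tt: "t - 1 + 1 = t" "t - 1 < lam i" using t t1 by auto
      have "G (mv lam s (i, t)) = real (t - 1) / p + V VO W"
        unfolding s_def succMD[OF i(1) t] using t1 gMD[OF F i(2) tt(2)] tt False i0F W_def
        by (simp add: G_def e0pe e0seg)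
      moreover have "real (t - 1) = real t - 1" using t by simp
      ultimately show ?thesis using gs p0 by (simp add: field_simps)
    qed
  next
    case True
    have tj: "j0 \<le> t" using e0 True j0 by (auto simp: e0seg)
    have gs: "g s = (real t + 1 - real j0) / p" unfolding s_def using gMD[OF F i(2) t(2)] True by simp
    show ?thesis
    proof (cases "j0 = t")
      case tj1: True
      have mem: "(i0, j0) \<in> snd (mv lam s (i, t))"
      proof (cases "t = 1")
        case True
        thus ?thesis unfolding s_def succMD[OF i(1) t] using `i = i0` by (simp add: e0pe)
      next
        case False
        have "t - 1 + 1 \<le> j0 \<and> j0 \<le> lam i0" using tj1 j0 t by simp
        thus ?thesis unfolding s_def succMD[OF i(1) t] using False `i = i0` by (simp only: e0seg snd_conv if_False Un_iff) simp
      qed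
      have "G (mv lam s (i, t)) = 0" using mem by (simp add: G_def)
      thus ?thesis using gs p0 tj1 by simp
    next
      case False
      have t1: "t \<noteq> 1" using False tj j0 by auto
      have tt: "t - 1 + 1 = t" "t - 1 < lam i" using t t1 by auto
      have "G (mv lam s (i, t)) = (real (t - 1) + 1 - real j0) / p"
        unfolding s_def succMD[OF i(1) t] using t1 gMD[OF F i(2) tt(2)] tt True i0F tj False
        by (simp add: G_def e0pe e0seg)
      moreover have "real (t - 1) = real t - 1" using t by simp
      ultimately show ?thesis using gs p0 by (simp add: field_simps)
    qed
  qed
  have "measure_pmf.expectation (rstep lam m p s) G = (1 - p) * G s + p * G (mv lam s (i, t))"
    by (rule onestep_single) (unfold s_def, rule Ev_MD[OF i t])
  also have "\<dots> = g s - 1" using key Gs by (simp add: algebra_simps)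
  finally show ?thesis unfolding s_def .
qed

lemma onestep:
  assumes "Inv s" and "(i0, j0) \<notin> snd s"
  shows "measure_pmf.expectation (rstep lam m p s) G = G s - 1"
proof -
  have "measure_pmf.expectation (rstep lam m p s) G = g s - 1"
    using assms onestepV onestepMO onestepMD unfolding Inv_def by auto
  thus ?thesis using assms(2) by (simp add: G_def)
qed

lemma trav_mono: "s' \<in> set_pmf (rstep lam m p s) \<Longrightarrow> snd s \<subseteq> snd s'"
  using set_rstep[of lam m p s] by (auto simp: mv_def)

lemma onestep_done:
  assumes "(i0, j0) \<in> snd s"
  shows "measure_pmf.expectation (rstep lam m p s) G = 0"
proof -
  have "measure_pmf.expectation (rstep lam m p s) G = measure_pmf.expectation (rstep lam m p s) (\<lambda>_. 0)"
  proof (rule integral_cong_AE)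
    show "AE x in measure_pmf (rstep lam m p s). G x = 0"
    proof (subst AE_measure_pmf_iff, intro ballI)
      fix x assume "x \<in> set_pmf (rstep lam m p s)"
      hence "(i0, j0) \<in> snd x" using trav_mono assms by blast
      thus "G x = 0" by (simp add: G_def)
    qed
  qed auto
  thus ?thesis by simp
qed

end



lemma exp_bind_fin:
  fixes h :: "'b \<Rightarrow> real"
  assumes fin: "finite (set_pmf M)" and finN: "\<And>x. x \<in> set_pmf M \<Longrightarrow> finite (set_pmf (N x))"
  shows "measure_pmf.expectation (bind_pmf M N) h = measure_pmf.expectation M (\<lambda>x. measure_pmf.expectation (N x) h)"
proof -
  have "measure_pmf.expectation (bind_pmf M N) h = (\<Sum>a\<in>set_pmf M. pmf M a *\<^sub>R measure_pmf.expectation (N a) h)"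
    by (rule pmf_expectation_bind[OF fin]) (auto simp: finN)
  also have "\<dots> = measure_pmf.expectation M (\<lambda>x. measure_pmf.expectation (N x) h)"
    by (rule integral_measure_pmf[OF fin, symmetric]) auto
  finally show ?thesis .
qed

context PG2 begin

lemma Hs_nonneg: "0 \<le> Hs p k"
proof (induction k)
  case (Suc k)
  have "(1 - p) ^ Suc k \<le> 1" by (rule power_le_one) (use p0 p1 in auto)
  hence "0 \<le> 1 / (1 - (1 - p) ^ Suc k)" by simp
  thus ?case using Suc by simp
qed simp

lemma PV_bounds: "0 \<le> PV k" "PV k \<le> 1"
  unfolding PV_def by (auto simp: divide_le_eq_1)

lemma dist_nonneg: "0 \<le> dist v"
  unfolding dist_def using j0 p0 by auto

lemma w_nonneg: "i < 2 * m \<Longrightarrow> 0 \<le> w i"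
  unfolding w_def using lam_pos[of i] p0 by auto

lemma V_nonneg: "U \<subseteq> {..<2*m} \<Longrightarrow> 0 \<le> V v U"
proof -
  assume U: "U \<subseteq> {..<2*m}"
  have "0 \<le> (\<Sum>i\<in>U - {i0}. w i)" using U w_nonneg by (intro sum_nonneg) auto
  moreover have "0 \<le> PV (card U) * dist v" using PV_bounds dist_nonneg by simp
  moreover have "0 \<le> (1 - PV (card U)) * dist (oth v)" using PV_bounds dist_nonneg by simp
  ultimately show ?thesis unfolding V_def using Hs_nonneg by simp
qed

lemma G_nonneg:
  assumes "Inv s" shows "0 \<le> G s"
proof (cases "(i0, j0) \<in> snd s")
  case True thus ?thesis by (simp add: G_def)
next
  case False
  from assms obtain F where F: "F \<subseteq> {..<2*m}" and cases:
     "(\<exists>v \<in> {VO, VD}. s = (v, pe F)) \<or>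
      (\<exists>i t. i < 2*m \<and> i \<notin> F \<and> 1 \<le> t \<and> t < lam i \<and>
         (s = (Mid i t, pe F \<union> seg i 1 t) \<or> s = (Mid i t, pe F \<union> seg i (t+1) (lam i))))"
    unfolding Inv_def by blast
  have W: "{..<2*m} - F - {i} \<subseteq> {..<2*m}" for i by auto
  from cases have "0 \<le> g s"
  proof (elim disjE exE conjE bexE)
    fix v assume "v \<in> {VO, VD}" "s = (v, pe F)"
    thus ?thesis using gV[OF F] V_nonneg by auto
  next
    fix i t assume i: "i < 2*m" "i \<notin> F" and t: "1 \<le> t" "t < lam i" and s: "s = (Mid i t, pe F \<union> seg i 1 t)"
    show ?thesis
    proof (cases "i = i0")
      case True
      have "t < j0" using False True j0 unfolding s by (auto simp: e0seg)
      thus ?thesis using gMO[OF F t(1), of i] True p0 unfolding s by simp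
    next
      case nt: False
      thus ?thesis using gMO[OF F t(1), of i] t p0 V_nonneg[OF W[of i]] unfolding s by simp
    qed
  next
    fix i t assume i: "i < 2*m" "i \<notin> F" and t: "1 \<le> t" "t < lam i" and s: "s = (Mid i t, pe F \<union> seg i (t+1) (lam i))"
    show ?thesis
    proof (cases "i = i0")
      case True
      have "j0 \<le> t" using False True j0 unfolding s by (auto simp: e0seg)
      thus ?thesis using gMD[OF F i(2) t(2)] True p0 unfolding s by simp
    next
      case nt: False
      thus ?thesis using gMD[OF F i(2) t(2)] t p0 V_nonneg[OF W[of i]] unfolding s by simp
    qed
  qed
  thus ?thesis using False by (simp add: G_def)
qed

definition SF :: "(pvertex \<times> edge set) set" where
  "SF = ({VO, VD} \<union> (\<lambda>(i, t). Mid i t) ` (SIGMA i:{..<2*m}. {..<lam i})) \<times> Pow (pedges lam m)"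

lemma finite_SF: "finite SF"
  unfolding SF_def by (intro finite_cartesian_product finite_UnI finite_imageI finite_SigmaI) (auto simp: finite_pedges)

lemma Inv_SF: "Inv s \<Longrightarrow> s \<in> SF"
proof -
  assume "Inv s"
  then obtain F where F: "F \<subseteq> {..<2*m}" and cases:
     "(\<exists>v \<in> {VO, VD}. s = (v, pe F)) \<or>
      (\<exists>i t. i < 2*m \<and> i \<notin> F \<and> 1 \<le> t \<and> t < lam i \<and>
         (s = (Mid i t, pe F \<union> seg i 1 t) \<or> s = (Mid i t, pe F \<union> seg i (t+1) (lam i))))"
    unfolding Inv_def by blast
  have peF: "pe F \<subseteq> pedges lam m" using F unfolding pe_def pedges_def by auto
  from cases show "s \<in> SF"
  proof (elim disjE exE conjE bexE)
    fix v assume "v \<in> {VO, VD}" "s = (v, pe F)" thus ?thesis using peF unfolding SF_def by auto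
  next
    fix i t assume i: "i < 2*m" "i \<notin> F" and t: "1 \<le> t" "t < lam i" and s: "s = (Mid i t, pe F \<union> seg i 1 t)"
    have "seg i 1 t \<subseteq> pedges lam m" using i t unfolding seg_def pedges_def by auto
    moreover have "Mid i t \<in> (\<lambda>(i, t). Mid i t) ` (SIGMA i:{..<2*m}. {..<lam i})"
      using i t by (auto intro!: image_eqI[of _ _ "(i, t)"])
    ultimately show ?thesis using peF unfolding s SF_def by auto
  next
    fix i t assume i: "i < 2*m" "i \<notin> F" and t: "1 \<le> t" "t < lam i" and s: "s = (Mid i t, pe F \<union> seg i (t+1) (lam i))"
    have "seg i (t+1) (lam i) \<subseteq> pedges lam m" using i t unfolding seg_def pedges_def by auto
    moreover have "Mid i t \<in> (\<lambda>(i, t). Mid i t) ` (SIGMA i:{..<2*m}. {..<lam i})"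
      using i t by (auto intro!: image_eqI[of _ _ "(i, t)"])
    ultimately show ?thesis using peF unfolding s SF_def by auto
  qed
qed

lemma rchain_Suc: "rchain lam m p (Suc t) = bind_pmf (rchain lam m p t) (rstep lam m p)"
  unfolding rchain_def by simp

lemma rchain_Inv: "s \<in> set_pmf (rchain lam m p t) \<Longrightarrow> Inv s"
proof (induction t arbitrary: s)
  case 0
  have "(VO, {}) = (VO, pe {})" by (simp add: pe_def)
  thus ?case using 0 InvV[of "{}" VO] by (simp add: rchain_def)
next
  case (Suc t)
  then obtain s0 where "s0 \<in> set_pmf (rchain lam m p t)" "s \<in> set_pmf (rstep lam m p s0)"
    unfolding rchain_Suc by auto
  thus ?case using Suc.IH Inv_step by blast
qed

lemma finite_rchain: "finite (set_pmf (rchain lam m p t))"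
  by (rule finite_subset[OF _ finite_SF]) (use rchain_Inv Inv_SF in blast)

definition rr :: "nat \<Rightarrow> real" where
  "rr t = measure_pmf.prob (rchain lam m p t) {s. (i0, j0) \<notin> snd s}"

definition Ex :: "nat \<Rightarrow> real" where
  "Ex t = measure_pmf.expectation (rchain lam m p t) G"

lemma rr_integral: "rr t = measure_pmf.expectation (rchain lam m p t) (indicator {s. (i0, j0) \<notin> snd s})"
  unfolding rr_def by simp

lemma Ex_Suc: "Ex (Suc t) = Ex t - rr t"
proof -
  let ?I = "indicator {s. (i0, j0) \<notin> snd s} :: _ \<Rightarrow> real"
  have "Ex (Suc t) = measure_pmf.expectation (rchain lam m p t) (\<lambda>s. measure_pmf.expectation (rstep lam m p s) G)"
    unfolding Ex_def rchain_Suc by (rule exp_bind_fin[OF finite_rchain finite_set_rstep])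
  also have "\<dots> = measure_pmf.expectation (rchain lam m p t) (\<lambda>s. G s - ?I s)"
  proof (rule integral_cong_AE)
    show "AE x in measure_pmf (rchain lam m p t). measure_pmf.expectation (rstep lam m p x) G = G x - ?I x"
    proof (subst AE_measure_pmf_iff, intro ballI)
      fix s assume s: "s \<in> set_pmf (rchain lam m p t)"
      show "measure_pmf.expectation (rstep lam m p s) G = G s - ?I s"
      proof (cases "(i0, j0) \<in> snd s")
        case True thus ?thesis using onestep_done by (simp add: G_def)
      next
        case False thus ?thesis using onestep[OF rchain_Inv[OF s]] by simp
      qed
    qed
  qed auto
  also have "\<dots> = Ex t - rr t"
    unfolding Ex_def rr_integral
    by (rule Bochner_Integration.integral_diff) (auto intro: integrable_measure_pmf_finite finite_rchain)
  finally show ?thesis .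
qed

lemma partial_sum: "(\<Sum>t<N. rr t) = Ex 0 - Ex N"
  by (induction N) (simp_all add: Ex_Suc)

lemma Ex_nonneg: "0 \<le> Ex N"
  unfolding Ex_def
  by (rule integral_nonneg_AE) (auto simp: AE_measure_pmf_iff intro: G_nonneg rchain_Inv)

definition Bd :: real where "Bd = Max (G ` SF)"

lemma G_le_Bd: "s \<in> SF \<Longrightarrow> G s \<le> Bd"
  unfolding Bd_def using finite_SF by (intro Max_ge) auto

lemma Ex_le: "Ex N \<le> Bd * rr N"
proof -
  let ?I = "indicator {s. (i0, j0) \<notin> snd s} :: _ \<Rightarrow> real"
  have "Ex N \<le> measure_pmf.expectation (rchain lam m p N) (\<lambda>s. Bd * ?I s)"
    unfolding Ex_def
  proof (rule integral_mono_AE)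
    show "AE x in measure_pmf (rchain lam m p N). G x \<le> Bd * ?I x"
    proof (subst AE_measure_pmf_iff, intro ballI)
      fix s assume s: "s \<in> set_pmf (rchain lam m p N)"
      show "G s \<le> Bd * ?I s"
        using G_le_Bd[OF Inv_SF[OF rchain_Inv[OF s]]] by (cases "(i0, j0) \<in> snd s") (auto simp: G_def)
    qed
  qed (auto intro: integrable_measure_pmf_finite finite_rchain)
  also have "\<dots> = Bd * rr N" unfolding rr_integral by simp
  finally show ?thesis .
qed

lemma rr_sums: "rr sums Ex 0"
proof -
  have nn: "0 \<le> rr t" for t unfolding rr_def by simp
  have bnd: "(\<Sum>t<N. rr t) \<le> Ex 0" for N using partial_sum[of N] Ex_nonneg[of N] by simp
  have sm: "summable rr" by (rule summableI_nonneg_bounded[OF nn bnd])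
  hence "rr \<longlonglongrightarrow> 0" by (rule summable_LIMSEQ_zero)
  hence lim: "(\<lambda>N. Bd * rr N) \<longlonglongrightarrow> 0" by (auto intro: tendsto_mult_right_zero)
  have "Ex \<longlonglongrightarrow> 0"
    by (rule tendsto_sandwich[of "\<lambda>_. 0" Ex sequentially "\<lambda>N. Bd * rr N"]) (auto simp: Ex_nonneg Ex_le lim)
  hence "(\<lambda>N. Ex 0 - Ex N) \<longlonglongrightarrow> Ex 0 - 0" by (intro tendsto_intros)
  hence "(\<lambda>N. \<Sum>t<N. rr t) \<longlonglongrightarrow> Ex 0" by (simp add: partial_sum)
  thus ?thesis by (simp add: sums_def)
qed

end



lemma canc: "(a::real) \<noteq> 0 \<Longrightarrow> a / b * (c / a) = c / b" by simp

lemma sum_1n: fixes f :: "nat \<Rightarrow> 'a::comm_monoid_add" and n :: nat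
  shows "(\<Sum>j = 1..n. f j) = (\<Sum>k<n. f (k + 1))"
  by (induction n) (auto simp: sum.cl_ivl_Suc)

lemma Hs_Phi: "Hs p (2 * Suc n) = ((\<Sum>k<2 * Suc n. 1 / (1 - (1 - p) ^ (k + 1))) + 1 / p) / 2 + Phi p (Suc n)"
proof (induction n)
  case 0
  have "Hs p 2 = 1 / (1 - (1 - p) ^ 2) + 1 / 2 * (1 / (1 - (1 - p)))"
    by (simp add: numeral_2_eq_2)
  thus ?case by (simp add: numeral_2_eq_2 field_simps)
next
  case (Suc n)
  define T where "T = (\<Sum>k<2 * Suc n. 1 / (1 - (1 - p) ^ (k + 1)))"
  define A3 where "A3 = 1 / (1 - (1 - p) ^ (2 * n + 3))"
  define A4 where "A4 = 1 / (1 - (1 - p) ^ (2 * n + 4))"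
  define P where "P = Phi p (Suc n)"
  have e2: "2 * Suc (Suc n) = Suc (Suc (2 * Suc n))" by simp
  have HsE: "Hs p (2 * Suc (Suc n)) = A4 + real (2 * n + 3) / real (2 * n + 4) * (A3 + real (2 * n + 2) / real (2 * n + 3) * Hs p (2 * Suc n))"
    unfolding e2 A3_def A4_def by (simp add: numeral_eq_Suc)
  have TS: "(\<Sum>k<2 * Suc (Suc n). 1 / (1 - (1 - p) ^ (k + 1))) = T + A3 + A4"
    unfolding T_def A3_def A4_def e2 by (simp add: numeral_eq_Suc)
  have Ph: "Phi p (Suc (Suc n)) = 1/2 * A4 + (1/2 - 1 / (2 * (real n + 2))) * A3
      - 1 / (2 * (real n + 2)) * (T + 1 / p) + (real n + 1) / (real n + 2) * P"
  proof -
    have s: "(\<Sum>j = 1..2 * (Suc (Suc n) - 1). 1 / (1 - (1 - p) ^ j)) = T"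
      unfolding T_def sum_1n by simp
    have a: "2 * Suc (Suc n) - 1 = 2 * n + 3" "2 * Suc (Suc n) = 2 * n + 4" by simp_all
    show ?thesis unfolding Phi.simps(3) Let_def s a A3_def A4_def P_def
      by (simp add: field_simps)
  qed
  have IH: "Hs p (2 * Suc n) = (T + 1 / p) / 2 + P" using Suc.IH unfolding T_def P_def .
  define z where "z = 1 / (real n + 2)"
  have c1: "real (2*n+3) / real (2*n+4) = 1 - z / 2"
    unfolding z_def by (simp add: field_simps)
  have c2: "real (2*n+3) / real (2*n+4) * (real (2*n+2) / real (2*n+3)) = 1 - z"
  proof -
    have "real (2*n+3) / real (2*n+4) * (real (2*n+2) / real (2*n+3)) = real (2*n+2) / real (2*n+4)"
      by (rule canc) simp
    also have "\<dots> = 1 - z" unfolding z_def by (simp add: field_simps)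
    finally show ?thesis .
  qed
  have c3: "1 / (2 * (real n + 2)) = z / 2" unfolding z_def by simp
  have c4: "(real n + 1) / (real n + 2) = 1 - z" unfolding z_def by (simp add: field_simps)
  have HsE': "Hs p (2 * Suc (Suc n)) = A4 + (1 - z / 2) * A3 + (1 - z) * Hs p (2 * Suc n)"
  proof -
    have "Hs p (2 * Suc (Suc n)) = A4 + (real (2 * n + 3) / real (2 * n + 4)) * A3
      + (real (2*n+3) / real (2*n+4) * (real (2*n+2) / real (2*n+3))) * Hs p (2 * Suc n)"
    proof -
      have dd: "\<And>A4 c A3 d H. (A4::real) + c * (A3 + d * H) = A4 + c * A3 + (c * d) * H"
        by (simp add: algebra_simps)
      show ?thesis unfolding HsE dd ..
    qed
    thus ?thesis unfolding c2 unfolding c1 .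
  qed
  have Ph': "Phi p (Suc (Suc n)) = 1/2 * A4 + (1/2 - z / 2) * A3 - z / 2 * (T + 1 / p) + (1 - z) * P"
    using Ph unfolding c3 c4 .
  have fin: "\<And>A3 A4 T ip z P :: real. A4 + (1 - z / 2) * A3 + (1 - z) * ((T + ip) / 2 + P)
     = (T + A3 + A4 + ip) / 2 + (1/2 * A4 + (1/2 - z / 2) * A3 - z / 2 * (T + ip) + (1 - z) * P)"
    by (simp add: field_simps)
  show ?case unfolding HsE' TS Ph' IH by (rule fin)
qed

context PG2 begin

lemma Ex0: "Ex 0 = (theta lam m p + 1 / p) / 2 + Phi p m"
proof -
  have m1: "m \<ge> 1" using i0 by simp
  have "Ex 0 = G (VO, pe {})" unfolding Ex_def by (simp add: rchain_def pe_def)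
  also have "\<dots> = V VO {..<2*m}" using gV[of "{}" VO] by (simp add: G_def e0pe)
  also have "\<dots> = Hs p (2 * m) + (\<Sum>i<2*m. w i) / 2"
  proof -
    have pv: "PV (2 * m) = 1 / 2" unfolding PV_def using m1 by simp
    have sw: "(\<Sum>i\<in>{..<2*m} - {i0}. w i) = (\<Sum>i<2*m. w i) - w i0"
      using i0 by (simp add: sum_diff1)
    have "dist VO + dist VD = w i0" unfolding dist_def w_def using p0 by (simp add: field_simps)
    thus ?thesis unfolding V_def card_lessThan pv sw using i0 by (simp add: oth_def field_simps)
  qed
  also have "\<dots> = (theta lam m p + 1 / p) / 2 + Phi p m"
  proof -
    obtain n where n: "m = Suc n" using m1 by (cases m) auto
    have "theta lam m p = (\<Sum>k<2*m. 1 / (1 - (1 - p) ^ (k + 1))) + (\<Sum>i<2*m. w i)"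
      unfolding theta_def w_def by (simp add: sum.distrib)
    thus ?thesis unfolding n Hs_Phi by (simp add: field_simps)
  qed
  finally show ?thesis .
qed

end

theorem mainTheorem13:
  fixes lam :: "nat \<Rightarrow> nat" and m :: nat and p :: real
  assumes "m \<ge> 1" and "0 < p" and "p \<le> 1"
    and "\<forall>i < 2 * m. lam i > 0"
  shows "(\<forall>e \<in> pedges lam m.
            search_time lam m p (uniform_eulerian lam m) e
              = ennreal ((theta lam m p + 1 / p) / 2 + Phi p m))
         \<and> game_val lam m p \<le> ennreal ((theta lam m p + 1 / p) / 2 + Phi p m)"
proof -
  have all: "search_time lam m p (uniform_eulerian lam m) e = ennreal ((theta lam m p + 1 / p) / 2 + Phi p m)"
    if e: "e \<in> pedges lam m" for e
  proof -
    obtain i0 j0 where ej: "e = (i0, j0)" by (cases e)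
    have ij: "i0 < 2 * m" "1 \<le> j0" "j0 \<le> lam i0" using e unfolding ej pedges_def by auto
    interpret P: PG2 lam m p i0 j0
      by unfold_locales (use assms ij in auto)
    have "search_time lam m p (uniform_eulerian lam m) e = (\<Sum>t. ennreal (P.rr t))"
      unfolding search_time_def P.rr_def ej prob_red ..
    also have "\<dots> = ennreal (\<Sum>t. P.rr t)"
    proof (rule suminf_ennreal2)
      show "summable P.rr" by (rule sums_summable[OF P.rr_sums])
    qed (simp add: P.rr_def)
    also have "(\<Sum>t. P.rr t) = P.Ex 0" using P.rr_sums by (rule sums_unique[symmetric])
    finally show ?thesis using P.Ex0 by simp
  qed
  moreover have "game_val lam m p \<le> ennreal ((theta lam m p + 1 / p) / 2 + Phi p m)"
  proof -
    have ne: "pedges lam m \<noteq> {}"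
    proof -
      have "0 < 2 * m" using assms(1) by simp
      hence "lam 0 > 0" using assms(4) by blast
      hence "(0, 1) \<in> pedges lam m" using assms(1) unfolding pedges_def by auto
      thus ?thesis by blast
    qed
    have "game_val lam m p \<le> (SUP e \<in> pedges lam m. search_time lam m p (uniform_eulerian lam m) e)"
      unfolding game_val_def by (rule INF_lower) simp
    also have "\<dots> = ennreal ((theta lam m p + 1 / p) / 2 + Phi p m)"
      using all ne by simp
    finally show ?thesis .
  qed
  ultimately show ?thesis by blast
qed

end
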